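(* Consider the closed-loop system $\dot p=-R(p)^Te(p)-(L_o\otimes I_d)\bar p$, i.e. \[ \dot p_i=\sum_{j\in\mathcal{N}_i}(p_j-p_i)\big(\|p_j-p_i\|^2-d_{ij}^2\big)+\sum_{j\in\mathcal{N}_i^o}\Big((p_j-p_i)-(\hat p_j-\hat p_i)\Big),\quad i=1,\dots,n. \] This system is a gradient descent flow, $\dot p=-\nabla V(p)$, of the potential \[ V=\tfrac14\sum_{(i,j)\in\mathcal{E}}\big(\|p_i-p_j\|^2-d_{ij}^2\big)^2+\tfrac12\sum_{(i,j)\in\mathcal{E}_o}\big\|(p_j-p_i)-(\hat p_j-\hat p_i)\big\|^2, \] with $\dot V=-\|R^Te+(L_o\otimes I_d)\bar p\|^2\le 0$. Moreover, the induced dynamics of the relative position vector $z=(H\otimes I_d)p$ is self-contained, and its solutions converge to the largest invariant set contained in \[ \mathcal{O}(z)=\{z:\ R(z)^Te(z)+(L_o\otimes I_d)\bar p(z)=0\}. \]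
   Context: Let $d\in\{2,3\}$, $n\ge2$ agents with positions $p_i\in\mathbb{R}^d$, $p=[p_1^T,\dots,p_n^T]^T\in\mathbb{R}^{dn}$. $\mathcal{G}=(\mathcal{V},\mathcal{E})$ is an undirected graph on $\{1,\dots,n\}$ with $m$ edges, $\mathcal{N}_i=\{j:(i,j)\in\mathcal{E}\}$. Give each edge $k$ an arbitrary orientation with head $j$ and tail $i$; the incidence matrix $H\in\mathbb{R}^{m\times n}$ has $h_{ki}=1$ if edge $k$ sinks at $i$, $-1$ if it leaves $i$, $0$ otherwise. Then $z_k=p_j-p_i$, $z=[z_1^T,\dots,z_m^T]^T=(H\otimes I_d)p$, $Z(z)=\mathrm{diag}(z_1,\dots,z_m)\in\mathbb{R}^{dm\times m}$ (block diagonal), and the rigidity matrix is $R=Z(z)^T(H\otimes I_d)\in\mathbb{R}^{m\times dn}$. Each edge $k=(i,j)$ has desired distance $d_k=d_{ij}>0$ and squared distance error $e_k=\|p_i-p_j\|^2-d_k^2$, $e=[e_1,\dots,e_m]^T$. A set of orientation edges $\mathcal{E}_o\subseteq\mathcal{E}$ defines the undirected graph $\mathcal{G}_o=(\mathcal{V},\mathcal{E}_o)$ with neighbor sets $\mathcal{N}_i^o$ and Laplacian $L_o\in\mathbb{R}^{n\times n}$. Agents incident to some edge of $\mathcal{E}_o$ (orientation agents) are assigned points $\hat p_i\in\mathbb{R}^d$ so that $\hat p_j-\hat p_i$ is the desired relative position for $(i,j)\in\mathcal{E}_o$, with $\|\hat p_j-\hat p_i\|=d_{ij}$. Define $\bar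 p=[\bar p_1^T,\dots,\bar p_n^T]^T$ with $\bar p_i=p_i-\hat p_i$ for orientation agents and $\bar p_i=0$ otherwise; note $(L_o\otimes I_d)\bar p$ depends only on relative positions (hence on $z$). *)

theory Defs
  imports "HOL-Analysis.Analysis"
begin

text \<open>Agents are indexed by a finite type 'n (vertex set = UNIV, n = CARD('n)).
  The undirected edge set is given with an arbitrary orientation as a set E of ordered
  pairs (i,j) (tail i, head j), containing no loop and no pair together with its reverse.
  The relative-position vector z = (H (x) I_d) p lives in (real^'d)^('n \<times> 'n), where only
  the coordinates k \<in> E are used (all other coordinates are 0).\<close>

definition nbrs :: "('n::finite \<times> 'n) set \<Rightarrow> 'n \<Rightarrow> 'n set" where
  "nbrs E i = {j. (i, j) \<in> E \<or> (j, i) \<in> E}"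

definition inc :: "'n::finite \<times> 'n \<Rightarrow> 'n \<Rightarrow> real" where
  "inc k i = (if i = snd k then 1 else if i = fst k then -1 else 0)"

definition zof :: "('n::finite \<times> 'n) set \<Rightarrow> (real^'d)^'n \<Rightarrow> (real^'d)^('n \<times> 'n)" where
  "zof E p = (\<chi> k. if k \<in> E then p $ snd k - p $ fst k else 0)"

text \<open>R(z)^T e(z) = (H (x) I_d)^T Z(z) e(z), component i = sum_k h_{ki} e_k z_k,
  with e_k = ||z_k||^2 - d_k^2\<close>
definition rigTe :: "('n::finite \<times> 'n) set \<Rightarrow> ('n \<Rightarrow> 'n \<Rightarrow> real) \<Rightarrow> (real^'d)^('n \<times> 'n) \<Rightarrow> (real^'d)^'n" where
  "rigTe E d z = (\<chi> i. \<Sum>k\<in>E. (inc k i * ((norm (z $ k))\<^sup>2 - (d (fst k) (snd k))\<^sup>2)) *\<^sub>R (z $ k))"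

definition orient_agent :: "('n::finite \<times> 'n) set \<Rightarrow> 'n \<Rightarrow> bool" where
  "orient_agent Eo i = (\<exists>j. (i, j) \<in> Eo \<or> (j, i) \<in> Eo)"

definition pbar :: "('n::finite \<times> 'n) set \<Rightarrow> ('n \<Rightarrow> real^'d) \<Rightarrow> (real^'d)^'n \<Rightarrow> (real^'d)^'n" where
  "pbar Eo ph p = (\<chi> i. if orient_agent Eo i then p $ i - ph i else 0)"

definition lapbar :: "('n::finite \<times> 'n) set \<Rightarrow> ('n \<Rightarrow> real^'d) \<Rightarrow> (real^'d)^'n \<Rightarrow> (real^'d)^'n" where
  "lapbar Eo ph p = (\<chi> i. \<Sum>j\<in>nbrs Eo i. pbar Eo ph p $ i - pbar Eo ph p $ j)"

text \<open>signed relative position p_j - p_i read off from z, for (i,j) or (j,i) in E\<close>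
definition zrel :: "('n::finite \<times> 'n) set \<Rightarrow> (real^'d)^('n \<times> 'n) \<Rightarrow> 'n \<Rightarrow> 'n \<Rightarrow> real^'d" where
  "zrel E z i j = (if (i, j) \<in> E then z $ (i, j) else - (z $ (j, i)))"

text \<open>(L_o (x) I_d) \bar p(z) written as a function of z\<close>
definition lap_z :: "('n::finite \<times> 'n) set \<Rightarrow> ('n \<times> 'n) set \<Rightarrow> ('n \<Rightarrow> real^'d) \<Rightarrow> (real^'d)^('n \<times> 'n) \<Rightarrow> (real^'d)^'n" where
  "lap_z E Eo ph z = (\<chi> i. \<Sum>j\<in>nbrs Eo i. (ph j - ph i) - zrel E z i j)"

definition closed_loop :: "('n::finite \<times> 'n) set \<Rightarrow> ('n \<times> 'n) set \<Rightarrow> ('n \<Rightarrow> 'n \<Rightarrow> real) \<Rightarrow> ('n \<Rightarrow> real^'d)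
    \<Rightarrow> (real^'d)^'n \<Rightarrow> (real^'d)^'n" where
  "closed_loop E Eo d ph p = - (rigTe E d (zof E p) + lapbar Eo ph p)"

definition potential :: "('n::finite \<times> 'n) set \<Rightarrow> ('n \<times> 'n) set \<Rightarrow> ('n \<Rightarrow> 'n \<Rightarrow> real) \<Rightarrow> ('n \<Rightarrow> real^'d)
    \<Rightarrow> (real^'d)^'n \<Rightarrow> real" where
  "potential E Eo d ph p =
     1/4 * (\<Sum>(i, j)\<in>E. ((norm (p $ i - p $ j))\<^sup>2 - (d i j)\<^sup>2)\<^sup>2)
   + 1/2 * (\<Sum>(i, j)\<in>Eo. (norm ((p $ j - p $ i) - (ph j - ph i)))\<^sup>2)"

text \<open>the induced z-dynamics: zdot = F(z), F(z) = (H (x) I_d) f(p) for any p with z = (H (x) I_d) p\<close>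
definition zdyn :: "('n::finite \<times> 'n) set \<Rightarrow> ('n \<times> 'n) set \<Rightarrow> ('n \<Rightarrow> 'n \<Rightarrow> real) \<Rightarrow> ('n \<Rightarrow> real^'d)
    \<Rightarrow> (real^'d)^('n \<times> 'n) \<Rightarrow> (real^'d)^('n \<times> 'n)" where
  "zdyn E Eo d ph z = zof E (closed_loop E Eo d ph (SOME p. zof E p = z))"

text \<open>Invariant set (in both time directions) of xdot = F x on state space Z: every solution
  defined on an interval I containing 0 and starting in S stays in S on all of I.\<close>
definition invariant_set :: "('a::real_normed_vector \<Rightarrow> 'a) \<Rightarrow> 'a set \<Rightarrow> 'a set \<Rightarrow> bool" where
  "invariant_set F Z S \<longleftrightarrow> S \<subseteq> Z \<and>
     (\<forall>I x. is_interval I \<and> 0 \<in> I \<and> x 0 \<in> S \<and>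
        (\<forall>t\<in>I. x t \<in> Z \<and> (x has_vector_derivative F (x t)) (at t within I))
        \<longrightarrow> (\<forall>t\<in>I. x t \<in> S))"

definition largest_invariant_in :: "('a::real_normed_vector \<Rightarrow> 'a) \<Rightarrow> 'a set \<Rightarrow> 'a set \<Rightarrow> 'a set" where
  "largest_invariant_in F Z Ob = \<Union>{S. S \<subseteq> Ob \<and> invariant_set F Z S}"

end

theory Submission
  imports Defs
begin


lemma zrel_zof:
  assumes "(i,j) \<in> E \<or> (j,i) \<in> E" "\<forall>(i, j)\<in>E. (j, i) \<notin> E"
  shows "zrel E (zof E p) i j = p $ j - p $ i"
  using assms unfolding zrel_def zof_def by auto

lemma lapbar_lap_z:
  assumes EoE: "Eo \<subseteq> E" and orient: "\<forall>(i, j)\<in>E. (j, i) \<notin> E"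
  shows "lapbar Eo ph p = lap_z E Eo ph (zof E p)"
proof -
  have "\<And>i j. j \<in> nbrs Eo i \<Longrightarrow> pbar Eo ph p $ i - pbar Eo ph p $ j = (ph j - ph i) - zrel E (zof E p) i j"
  proof -
    fix i j assume j: "j \<in> nbrs Eo i"
    hence oa: "orient_agent Eo i" "orient_agent Eo j" unfolding nbrs_def orient_agent_def by auto
    have "zrel E (zof E p) i j = p $ j - p $ i"
      using j EoE orient by (intro zrel_zof) (auto simp: nbrs_def)
    thus "pbar Eo ph p $ i - pbar Eo ph p $ j = (ph j - ph i) - zrel E (zof E p) i j"
      using oa by (simp add: pbar_def algebra_simps)
  qed
  thus ?thesis unfolding lapbar_def lap_z_def by (simp add: vec_eq_iff)
qed

lemma sum_inc:
  fixes f :: "'n::finite \<Rightarrow> 'n \<Rightarrow> 'a::ab_group_add"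
  assumes noloop: "\<forall>(i, j)\<in>E. i \<noteq> j" and orient: "\<forall>(i, j)\<in>E. (j, i) \<notin> E"
  shows "(\<Sum>k\<in>E. (if i = snd k then f (fst k) (snd k) else if i = fst k then - f (fst k) (snd k) else 0))
       = (\<Sum>j\<in>nbrs E i. (if (j,i) \<in> E then f j i else - f i j))"
proof -
  let ?A = "{j. (i,j) \<in> E}" and ?B = "{j. (j,i) \<in> E}"
  have nb: "nbrs E i = ?B \<union> ?A" unfolding nbrs_def by auto
  have disj: "?B \<inter> ?A = {}" using orient by auto
  have "(\<Sum>j\<in>nbrs E i. (if (j,i) \<in> E then f j i else - f i j))
      = (\<Sum>j\<in>?B. f j i) + (\<Sum>j\<in>?A. - f i j)"
    unfolding nb using disj by (subst sum.union_disjoint) (auto intro!: sum.cong)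
  also have "(\<Sum>j\<in>?B. f j i) = (\<Sum>k\<in>E \<inter> {k. snd k = i}. f (fst k) (snd k))"
    by (rule sum.reindex_bij_witness[where i = fst and j = "\<lambda>j. (j,i)"]) auto
  also have "(\<Sum>j\<in>?A. - f i j) = (\<Sum>k\<in>E \<inter> {k. fst k = i}. - f (fst k) (snd k))"
    by (rule sum.reindex_bij_witness[where i = snd and j = "\<lambda>j. (i,j)"]) auto
  also have "(\<Sum>k\<in>E \<inter> {k. snd k = i}. f (fst k) (snd k)) + (\<Sum>k\<in>E \<inter> {k. fst k = i}. - f (fst k) (snd k))
     = (\<Sum>k\<in>E. (if i = snd k then f (fst k) (snd k) else if i = fst k then - f (fst k) (snd k) else 0))"
  proof -
    have d: "(E \<inter> {k. snd k = i}) \<inter> (E \<inter> {k. fst k = i}) = {}" using noloop by auto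
    have "(\<Sum>k\<in>E. (if i = snd k then f (fst k) (snd k) else if i = fst k then - f (fst k) (snd k) else 0))
       = (\<Sum>k\<in>(E \<inter> {k. snd k = i}) \<union> (E \<inter> {k. fst k = i}). (if i = snd k then f (fst k) (snd k) else if i = fst k then - f (fst k) (snd k) else 0))"
      by (rule sum.mono_neutral_right) auto
    also have "\<dots> = (\<Sum>k\<in>E \<inter> {k. snd k = i}. f (fst k) (snd k)) + (\<Sum>k\<in>E \<inter> {k. fst k = i}. - f (fst k) (snd k))"
      using d noloop by (subst sum.union_disjoint) (auto intro!: sum.cong arg_cong2[where f="(+)"])
    finally show ?thesis by simp
  qed
  finally show ?thesis by simp
qed

lemma rigTe_comp:
  assumes noloop: "\<forall>(i, j)\<in>E. i \<noteq> j" and orient: "\<forall>(i, j)\<in>E. (j, i) \<notin> E"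
    and dsym: "\<forall>(i, j)\<in>E. d j i = d i j"
  shows "rigTe E d (zof E p) $ i =
     - (\<Sum>j\<in>nbrs E i. ((norm (p $ j - p $ i))\<^sup>2 - (d i j)\<^sup>2) *\<^sub>R (p $ j - p $ i))"
proof -
  define F where "F a b = ((norm (p $ b - p $ a))\<^sup>2 - (d a b)\<^sup>2) *\<^sub>R (p $ b - p $ a)" for a b
  have "rigTe E d (zof E p) $ i = (\<Sum>k\<in>E. (if i = snd k then F (fst k) (snd k) else if i = fst k then - F (fst k) (snd k) else 0))"
    unfolding rigTe_def vec_lambda_beta
    by (intro sum.cong refl) (auto simp: zof_def inc_def F_def scaleR_left_diff_distrib)
  also have "\<dots> = (\<Sum>j\<in>nbrs E i. (if (j,i) \<in> E then F j i else - F i j))"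
    by (rule sum_inc[OF noloop orient])
  also have "\<dots> = (\<Sum>j\<in>nbrs E i. - F i j)"
  proof (intro sum.cong refl)
    fix j assume "j \<in> nbrs E i"
    show "(if (j,i) \<in> E then F j i else - F i j) = - F i j"
    proof (cases "(j,i) \<in> E")
      case True
      hence "d j i = d i j" using dsym by auto
      moreover have "norm (p $ i - p $ j) = norm (p $ j - p $ i)" by (rule norm_minus_commute)
      ultimately show ?thesis using True unfolding F_def
        by (simp add: algebra_simps)
    qed simp
  qed
  finally show ?thesis unfolding F_def by (simp add: sum_negf)
qed

lemma part1:
  assumes noloop: "\<forall>(i, j)\<in>E. i \<noteq> j" and orient: "\<forall>(i, j)\<in>E. (j, i) \<notin> E"
    and dsym: "\<forall>(i, j)\<in>E. d j i = d i j" and EoE: "Eo \<subseteq> E"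
  shows "closed_loop E Eo d ph p $ i =
        (\<Sum>j\<in>nbrs E i. ((norm (p $ j - p $ i))\<^sup>2 - (d i j)\<^sup>2) *\<^sub>R (p $ j - p $ i))
      + (\<Sum>j\<in>nbrs Eo i. (p $ j - p $ i) - (ph j - ph i))"
proof -
  have "lapbar Eo ph p $ i = (\<Sum>j\<in>nbrs Eo i. (ph j - ph i) - (p $ j - p $ i))"
  proof -
    have "\<And>j. j \<in> nbrs Eo i \<Longrightarrow> pbar Eo ph p $ i - pbar Eo ph p $ j = (ph j - ph i) - (p $ j - p $ i)"
    proof -
      fix j assume j: "j \<in> nbrs Eo i"
      hence oa: "orient_agent Eo i" "orient_agent Eo j" unfolding nbrs_def orient_agent_def by auto
      thus "pbar Eo ph p $ i - pbar Eo ph p $ j = (ph j - ph i) - (p $ j - p $ i)"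
        by (simp add: pbar_def algebra_simps)
    qed
    thus ?thesis unfolding lapbar_def by simp
  qed
  moreover have "(\<Sum>j\<in>nbrs Eo i. (p $ j - p $ i) - (ph j - ph i)) = - (\<Sum>j\<in>nbrs Eo i. (ph j - ph i) - (p $ j - p $ i))"
    by (simp add: sum_negf[symmetric] algebra_simps)
  ultimately show ?thesis unfolding closed_loop_def using rigTe_comp[OF noloop orient dsym, of p i]
    by simp
qed

definition Gz :: "('n::finite \<times> 'n) set \<Rightarrow> ('n \<times> 'n) set \<Rightarrow> ('n \<Rightarrow> 'n \<Rightarrow> real) \<Rightarrow> ('n \<Rightarrow> real^'d)
    \<Rightarrow> (real^'d)^('n \<times> 'n) \<Rightarrow> (real^'d)^'n" where
  "Gz E Eo d ph w = - (rigTe E d w + lap_z E Eo ph w)"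

definition Vz :: "('n::finite \<times> 'n) set \<Rightarrow> ('n \<times> 'n) set \<Rightarrow> ('n \<Rightarrow> 'n \<Rightarrow> real) \<Rightarrow> ('n \<Rightarrow> real^'d)
    \<Rightarrow> (real^'d)^('n \<times> 'n) \<Rightarrow> real" where
  "Vz E Eo d ph w = 1/4 * (\<Sum>k\<in>E. ((norm (w $ k))\<^sup>2 - (d (fst k) (snd k))\<^sup>2)\<^sup>2)
     + 1/2 * (\<Sum>k\<in>Eo. (norm (w $ k - (ph (snd k) - ph (fst k))))\<^sup>2)"

definition DVz :: "('n::finite \<times> 'n) set \<Rightarrow> ('n \<times> 'n) set \<Rightarrow> ('n \<Rightarrow> 'n \<Rightarrow> real) \<Rightarrow> ('n \<Rightarrow> real^'d)
    \<Rightarrow> (real^'d)^('n \<times> 'n) \<Rightarrow> (real^'d)^('n \<times> 'n) \<Rightarrow> real" where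
  "DVz E Eo d ph w h = (\<Sum>k\<in>E. (((norm (w $ k))\<^sup>2 - (d (fst k) (snd k))\<^sup>2) *\<^sub>R w $ k) \<bullet> h $ k)
     + (\<Sum>k\<in>Eo. (w $ k - (ph (snd k) - ph (fst k))) \<bullet> h $ k)"

lemma closed_loop_Gz:
  assumes EoE: "Eo \<subseteq> E" and orient: "\<forall>(i, j)\<in>E. (j, i) \<notin> E"
  shows "closed_loop E Eo d ph p = Gz E Eo d ph (zof E p)"
  unfolding closed_loop_def Gz_def using lapbar_lap_z[OF EoE orient] by simp

lemma potential_Vz:
  assumes EoE: "Eo \<subseteq> E"
  shows "potential E Eo d ph p = Vz E Eo d ph (zof E p)"
proof -
  have "(\<Sum>(i, j)\<in>E. ((norm (p $ i - p $ j))\<^sup>2 - (d i j)\<^sup>2)\<^sup>2) = (\<Sum>k\<in>E. ((norm (zof E p $ k))\<^sup>2 - (d (fst k) (snd k))\<^sup>2)\<^sup>2)"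
    by (intro sum.cong refl) (auto simp: zof_def norm_minus_commute)
  moreover have "(\<Sum>(i, j)\<in>Eo. (norm ((p $ j - p $ i) - (ph j - ph i)))\<^sup>2) = (\<Sum>k\<in>Eo. (norm (zof E p $ k - (ph (snd k) - ph (fst k))))\<^sup>2)"
    using EoE by (intro sum.cong refl) (auto simp: zof_def)
  ultimately show ?thesis unfolding potential_def Vz_def by simp
qed

lemma vec_nth_has_derivative[derivative_intros]:
  "((\<lambda>x. x $ k) has_derivative (\<lambda>x. x $ k)) F"
  by (rule bounded_linear_imp_has_derivative) (rule bounded_linear_vec_nth)

lemma sq_deriv:
  fixes w :: "(real^'d)^('n::finite \<times> 'n)"
  shows "((\<lambda>x. ((norm (x $ k))\<^sup>2 - c)\<^sup>2) has_derivative (\<lambda>h. 4 * ((((norm (w $ k))\<^sup>2 - c) *\<^sub>R w $ k) \<bullet> h $ k))) (at w)"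
  unfolding power2_norm_eq_inner
  apply (rule has_derivative_eq_rhs)
   apply (rule derivative_eq_intros refl)+
  apply (auto simp: fun_eq_iff inner_commute algebra_simps)
  done

lemma lin_deriv:
  fixes w :: "(real^'d)^('n::finite \<times> 'n)"
  shows "((\<lambda>x. (norm (x $ k - c))\<^sup>2) has_derivative (\<lambda>h. 2 * ((w $ k - c) \<bullet> h $ k))) (at w)"
  unfolding power2_norm_eq_inner
  apply (rule has_derivative_eq_rhs)
   apply (rule derivative_eq_intros refl)+
  apply (auto simp: fun_eq_iff inner_commute algebra_simps)
  done

lemma Vz_deriv: "(Vz E Eo d ph has_derivative DVz E Eo d ph w) (at w)"
proof -
  have "((\<lambda>x. 1/4 * (\<Sum>k\<in>E. ((norm (x $ k))\<^sup>2 - (d (fst k) (snd k))\<^sup>2)\<^sup>2)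
     + 1/2 * (\<Sum>k\<in>Eo. (norm (x $ k - (ph (snd k) - ph (fst k))))\<^sup>2)) has_derivative
     (\<lambda>h. 1/4 * (\<Sum>k\<in>E. 4 * ((((norm (w $ k))\<^sup>2 - (d (fst k) (snd k))\<^sup>2) *\<^sub>R w $ k) \<bullet> h $ k))
     + 1/2 * (\<Sum>k\<in>Eo. 2 * ((w $ k - (ph (snd k) - ph (fst k))) \<bullet> h $ k)))) (at w)"
    by (intro has_derivative_add has_derivative_mult_right has_derivative_sum sq_deriv lin_deriv)
  thus ?thesis unfolding Vz_def DVz_def
    by (simp add: sum_distrib_left[symmetric] flip: sum_distrib_left)
qed

lemma sum_inc_scale:
  fixes h :: "'a::real_vector^'n::finite"
  assumes "fst k \<noteq> snd k"
  shows "(\<Sum>i\<in>UNIV. inc k i *\<^sub>R h $ i) = h $ snd k - h $ fst k"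
proof -
  have "(\<Sum>i\<in>UNIV. inc k i *\<^sub>R h $ i) = (\<Sum>i\<in>UNIV. (if i = snd k then h $ i else 0) + (if i = fst k then - h $ i else 0))"
    using assms by (intro sum.cong refl) (auto simp: inc_def)
  also have "\<dots> = h $ snd k - h $ fst k"
    by (simp add: sum.distrib)
  finally show ?thesis .
qed

lemma Linc:
  fixes v :: "'n::finite \<times> 'n \<Rightarrow> 'a::real_inner" and h :: "'a^'n"
  assumes "\<forall>(i,j)\<in>S. i \<noteq> j"
  shows "(\<chi> i. \<Sum>k\<in>S. inc k i *\<^sub>R v k) \<bullet> h = (\<Sum>k\<in>S. v k \<bullet> (h $ snd k - h $ fst k))"
proof -
  have "(\<chi> i. \<Sum>k\<in>S. inc k i *\<^sub>R v k) \<bullet> h = (\<Sum>i\<in>UNIV. \<Sum>k\<in>S. inc k i * (v k \<bullet> h $ i))"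
    unfolding inner_vec_def by (simp add: inner_sum_left)
  also have "\<dots> = (\<Sum>k\<in>S. \<Sum>i\<in>UNIV. inc k i * (v k \<bullet> h $ i))"
    by (rule sum.swap)
  also have "\<dots> = (\<Sum>k\<in>S. v k \<bullet> (\<Sum>i\<in>UNIV. inc k i *\<^sub>R h $ i))"
    by (simp add: inner_sum_right)
  also have "\<dots> = (\<Sum>k\<in>S. v k \<bullet> (h $ snd k - h $ fst k))"
    using assms by (intro sum.cong refl) (auto simp: sum_inc_scale)
  finally show ?thesis .
qed

lemma rigTe_inc: "rigTe E d w = (\<chi> i. \<Sum>k\<in>E. inc k i *\<^sub>R (((norm (w $ k))\<^sup>2 - (d (fst k) (snd k))\<^sup>2) *\<^sub>R w $ k))"
  unfolding rigTe_def by simp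

lemma lap_z_inc:
  assumes EoE: "Eo \<subseteq> E" and noloop: "\<forall>(i, j)\<in>E. i \<noteq> j" and orient: "\<forall>(i, j)\<in>E. (j, i) \<notin> E"
  shows "lap_z E Eo ph w = (\<chi> i. \<Sum>k\<in>Eo. inc k i *\<^sub>R (w $ k - (ph (snd k) - ph (fst k))))"
proof -
  have no: "\<forall>(i, j)\<in>Eo. i \<noteq> j" using EoE noloop by auto
  have oo: "\<forall>(i, j)\<in>Eo. (j, i) \<notin> Eo" using EoE orient by fast
  have "(\<Sum>k\<in>Eo. inc k i *\<^sub>R (w $ k - (ph (snd k) - ph (fst k)))) = (\<Sum>j\<in>nbrs Eo i. (ph j - ph i) - zrel E w i j)" for i
  proof -
    define f where "f a b = w $ (a,b) - (ph b - ph a)" for a b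
    have "(\<Sum>k\<in>Eo. inc k i *\<^sub>R (w $ k - (ph (snd k) - ph (fst k))))
      = (\<Sum>k\<in>Eo. (if i = snd k then f (fst k) (snd k) else if i = fst k then - f (fst k) (snd k) else 0))"
      by (intro sum.cong refl) (auto simp: inc_def f_def)
    also have "\<dots> = (\<Sum>j\<in>nbrs Eo i. (if (j,i) \<in> Eo then f j i else - f i j))"
      by (rule sum_inc[OF no oo])
    also have "\<dots> = (\<Sum>j\<in>nbrs Eo i. (ph j - ph i) - zrel E w i j)"
    proof (intro sum.cong refl)
      fix j assume j: "j \<in> nbrs Eo i"
      show "(if (j,i) \<in> Eo then f j i else - f i j) = (ph j - ph i) - zrel E w i j"
      proof (cases "(j,i) \<in> Eo")
        case True
        hence "(i,j) \<notin> E" using EoE orient by auto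
        thus ?thesis using True by (simp add: f_def zrel_def algebra_simps)
      next
        case False
        hence "(i,j) \<in> Eo" using j by (auto simp: nbrs_def)
        hence "(i,j) \<in> E" using EoE by auto
        thus ?thesis using False by (simp add: f_def zrel_def algebra_simps)
      qed
    qed
    finally show ?thesis .
  qed
  thus ?thesis unfolding lap_z_def by (simp add: vec_eq_iff)
qed

lemma K_identity:
  assumes EoE: "Eo \<subseteq> E" and noloop: "\<forall>(i, j)\<in>E. i \<noteq> j" and orient: "\<forall>(i, j)\<in>E. (j, i) \<notin> E"
  shows "DVz E Eo d ph w (zof E h) = (rigTe E d w + lap_z E Eo ph w) \<bullet> h"
proof -
  have no: "\<forall>(i, j)\<in>Eo. i \<noteq> j" using EoE noloop by auto
  have "DVz E Eo d ph w (zof E h) = (\<Sum>k\<in>E. (((norm (w $ k))\<^sup>2 - (d (fst k) (snd k))\<^sup>2) *\<^sub>R w $ k) \<bullet> (h $ snd k - h $ fst k))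
     + (\<Sum>k\<in>Eo. (w $ k - (ph (snd k) - ph (fst k))) \<bullet> (h $ snd k - h $ fst k))"
    unfolding DVz_def using EoE by (auto simp: zof_def intro!: sum.cong arg_cong2[where f="(+)"])
  also have "\<dots> = (rigTe E d w + lap_z E Eo ph w) \<bullet> h"
    unfolding inner_add_left rigTe_inc lap_z_inc[OF EoE noloop orient] Linc[OF noloop] Linc[OF no] ..
  finally show ?thesis .
qed

lemma linear_zof: "linear (zof E)"
  by (rule linearI) (auto simp: zof_def vec_eq_iff algebra_simps)

lemma bounded_linear_zof: "bounded_linear (zof E)"
  using linear_zof linear_conv_bounded_linear by blast

lemma zof_has_derivative: "(zof E has_derivative zof E) F"
  by (rule bounded_linear_imp_has_derivative[OF bounded_linear_zof])

lemma zdyn_Gz: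
  assumes EoE: "Eo \<subseteq> E" and orient: "\<forall>(i, j)\<in>E. (j, i) \<notin> E" and w: "w \<in> range (zof E)"
  shows "zdyn E Eo d ph w = zof E (Gz E Eo d ph w)"
proof -
  have ex: "\<exists>p. zof E p = w" using w by auto
  have "zof E (SOME p. zof E p = w) = w" using someI_ex[OF ex] .
  thus ?thesis unfolding zdyn_def closed_loop_Gz[OF EoE orient] by simp
qed

lemma part2:
  assumes EoE: "Eo \<subseteq> E" and noloop: "\<forall>(i, j)\<in>E. i \<noteq> j" and orient: "\<forall>(i, j)\<in>E. (j, i) \<notin> E"
  shows "(potential E Eo d ph has_derivative (\<lambda>h. (- closed_loop E Eo d ph p) \<bullet> h)) (at p)"
proof -
  have pe: "potential E Eo d ph = Vz E Eo d ph \<circ> zof E" using potential_Vz[OF EoE] by (auto simp: fun_eq_iff)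
  have "((Vz E Eo d ph \<circ> zof E) has_derivative (DVz E Eo d ph (zof E p) \<circ> zof E)) (at p)"
    by (rule diff_chain_at[OF zof_has_derivative Vz_deriv])
  moreover have "(DVz E Eo d ph (zof E p) \<circ> zof E) = (\<lambda>h. (- closed_loop E Eo d ph p) \<bullet> h)"
    unfolding comp_def K_identity[OF EoE noloop orient] closed_loop_Gz[OF EoE orient] Gz_def by (simp add: add.commute)
  ultimately show ?thesis using pe by simp
qed

lemma part3:
  assumes EoE: "Eo \<subseteq> E" and noloop: "\<forall>(i, j)\<in>E. i \<noteq> j" and orient: "\<forall>(i, j)\<in>E. (j, i) \<notin> E"
    and pd: "(p has_vector_derivative closed_loop E Eo d ph (p t)) (at t)"
  shows "((\<lambda>s. potential E Eo d ph (p s)) has_real_derivative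
            - (norm (rigTe E d (zof E (p t)) + lapbar Eo ph (p t)))\<^sup>2) (at t)"
proof -
  let ?c = "closed_loop E Eo d ph (p t)"
  have "((potential E Eo d ph \<circ> p) has_derivative ((\<lambda>h. (- ?c) \<bullet> h) \<circ> (\<lambda>s. s *\<^sub>R ?c))) (at t)"
    using pd unfolding has_vector_derivative_def
    by (rule diff_chain_at[OF _ part2[OF EoE noloop orient]])
  moreover have "((\<lambda>h. (- ?c) \<bullet> h) \<circ> (\<lambda>s. s *\<^sub>R ?c)) = (*) (- (norm (rigTe E d (zof E (p t)) + lapbar Eo ph (p t)))\<^sup>2)"
    unfolding closed_loop_def by (auto simp: fun_eq_iff power2_norm_eq_inner inner_add_left algebra_simps)
  ultimately show ?thesis unfolding has_field_derivative_def comp_def by simp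
qed

lemma subspace_range_zof: "subspace (range (zof E :: (real^'d)^'n::finite \<Rightarrow> _))"
proof -
  have l: "linear (zof E :: (real^'d)^'n::finite \<Rightarrow> _)" by (rule linear_zof)
  show ?thesis unfolding subspace_def
  proof (intro conjI ballI allI)
    show "0 \<in> range (zof E :: (real^'d)^'n::finite \<Rightarrow> _)" by (rule range_eqI[of _ _ 0]) (simp add: linear_0[OF l])
  next
    fix x y :: "(real^'d)^('n \<times> 'n)" assume "x \<in> range (zof E)" "y \<in> range (zof E)"
    then obtain a b where "x = zof E a" "y = zof E b" by auto
    thus "x + y \<in> range (zof E)" using linear_add[OF l, of a b] by (metis rangeI)
  next
    fix c :: real and x :: "(real^'d)^('n \<times> 'n)" assume "x \<in> range (zof E)"
    then obtain a where "x = zof E a" by auto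
    thus "c *\<^sub>R x \<in> range (zof E)" using linear_scale[OF l, of c a] by (metis rangeI)
  qed
qed

lemma zdyn_range: "zdyn E Eo d ph w \<in> range (zof E)"
  unfolding zdyn_def by simp

lemma stays_in_range:
  fixes z :: "real \<Rightarrow> (real^'d)^('n::finite \<times> 'n)"
  assumes z0: "z 0 \<in> range (zof E)"
    and zd: "\<forall>t\<ge>0. (z has_vector_derivative zdyn E Eo d ph (z t)) (at t within {0..})"
    and t: "t \<ge> 0"
  shows "z t \<in> range (zof E)"
proof -
  let ?Z = "range (zof E :: (real^'d)^'n \<Rightarrow> (real^'d)^('n \<times> 'n))"
  have sp: "span ?Z = ?Z" using subspace_range_zof by (rule span_eq_iff[THEN iffD2])
  obtain y q where y: "y \<in> span ?Z" and q: "\<And>w. w \<in> span ?Z \<Longrightarrow> orthogonal q w" and zt: "z t = y + q"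
    using orthogonal_subspace_decomp_exists[of ?Z "z t"] by blast
  have "\<exists>c. \<forall>s\<in>{0..}. q \<bullet> z s = c"
  proof (rule has_derivative_zero_constant)
    show "convex {0::real..}" by (rule convex_real_interval)
  next
    fix s :: real assume s: "s \<in> {0..}"
    have "((\<lambda>s. q \<bullet> z s) has_derivative (\<lambda>h. q \<bullet> (h *\<^sub>R zdyn E Eo d ph (z s)))) (at s within {0..})"
      using zd s unfolding has_vector_derivative_def
      by (intro bounded_linear.has_derivative[OF bounded_linear_inner_right]) auto
    moreover have "(\<lambda>h. q \<bullet> (h *\<^sub>R zdyn E Eo d ph (z s))) = (\<lambda>h. 0)"
      using q[of "zdyn E Eo d ph (z s)"] zdyn_range[of E Eo d ph "z s"] sp by (auto simp: orthogonal_def)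
    ultimately show "((\<lambda>s. q \<bullet> z s) has_derivative (\<lambda>h. 0)) (at s within {0..})" by simp
  qed
  then obtain c where c: "\<forall>s\<in>{0..}. q \<bullet> z s = c" by blast
  have "q \<bullet> z 0 = 0" using q[of "z 0"] z0 sp by (auto simp: orthogonal_def)
  hence "q \<bullet> z t = 0" using c t by auto
  hence "q \<bullet> q = 0" using zt q[OF y] by (simp add: inner_add_right orthogonal_def)
  hence "q = 0" by simp
  thus ?thesis using zt y sp by simp
qed

lemma mvt_within:
  fixes f f' :: "real \<Rightarrow> real"
  assumes ab: "a < b" and sub: "{a..b} \<subseteq> S"
    and der: "\<And>x. x \<in> S \<Longrightarrow> (f has_real_derivative f' x) (at x within S)"
  shows "\<exists>\<xi>. a < \<xi> \<and> \<xi> < b \<and> f b - f a = (b - a) * f' \<xi>"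
proof -
  have "continuous_on S f"
    unfolding continuous_on_eq_continuous_within using der DERIV_continuous by blast
  hence c: "continuous_on {a..b} f" using sub continuous_on_subset by blast
  have d: "DERIV f x :> f' x" if "a < x" "x < b" for x
  proof -
    have "x \<in> interior {a..b}" using that by simp
    hence "x \<in> interior S" using interior_mono[OF sub] by blast
    hence "at x within S = at x" by (rule at_within_interior)
    moreover have "x \<in> S" using that sub by auto
    ultimately show ?thesis using der by metis
  qed
  obtain l \<xi> where "a < \<xi>" "\<xi> < b" "DERIV f \<xi> :> l" "f b - f a = (b - a) * l"
    using MVT[OF ab c] d real_differentiable_def by blast
  moreover have "l = f' \<xi>" using DERIV_unique[OF \<open>DERIV f \<xi> :> l\<close> d] calculation by blast
  ultimately show ?thesis by blast
qed

lemma norm_vec_le_sum: "norm (x :: 'a::real_normed_vector^'n::finite) \<le> (\<Sum>i\<in>UNIV. norm (x $ i))"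
  unfolding norm_vec_def by (rule L2_set_le_sum) simp

lemma norm_inc_sum:
  fixes v :: "'n::finite \<times> 'n \<Rightarrow> 'a::real_normed_vector"
  shows "norm (\<chi> i. \<Sum>k\<in>S. inc k i *\<^sub>R v k) \<le> real CARD('n) * (\<Sum>k\<in>S. norm (v k))"
proof -
  have "norm (\<chi> i. \<Sum>k\<in>S. inc k i *\<^sub>R v k) \<le> (\<Sum>i\<in>(UNIV::'n set). norm (\<Sum>k\<in>S. inc k i *\<^sub>R v k))"
    using norm_vec_le_sum[of "\<chi> i. \<Sum>k\<in>S. inc k i *\<^sub>R v k"] by simp
  also have "\<dots> \<le> (\<Sum>i\<in>(UNIV::'n set). (\<Sum>k\<in>S. norm (v k)))"
  proof (rule sum_mono)
    fix i :: 'n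
    have "norm (\<Sum>k\<in>S. inc k i *\<^sub>R v k) \<le> (\<Sum>k\<in>S. norm (inc k i *\<^sub>R v k))" by (rule norm_sum)
    also have "\<dots> \<le> (\<Sum>k\<in>S. norm (v k))"
      by (rule sum_mono) (auto simp: inc_def)
    finally show "norm (\<Sum>k\<in>S. inc k i *\<^sub>R v k) \<le> (\<Sum>k\<in>S. norm (v k))" .
  qed
  also have "\<dots> = real CARD('n) * (\<Sum>k\<in>S. norm (v k))" by simp
  finally show ?thesis .
qed

lemma cubic_lip:
  fixes u v :: "'a::real_normed_vector"
  assumes u: "norm u \<le> B" and v: "norm v \<le> B"
  shows "norm (((norm u)\<^sup>2 - c) *\<^sub>R u - ((norm v)\<^sup>2 - c) *\<^sub>R v) \<le> (3 * B\<^sup>2 + \<bar>c\<bar>) * norm (u - v)"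
proof -
  have B0: "0 \<le> B" using u norm_ge_zero order_trans by blast
  have eq: "((norm u)\<^sup>2 - c) *\<^sub>R u - ((norm v)\<^sup>2 - c) *\<^sub>R v
      = ((norm u)\<^sup>2 - c) *\<^sub>R (u - v) + ((norm u)\<^sup>2 - (norm v)\<^sup>2) *\<^sub>R v"
    by (simp add: algebra_simps)
  have a1: "\<bar>(norm u)\<^sup>2 - c\<bar> \<le> B\<^sup>2 + \<bar>c\<bar>"
  proof -
    have "(norm u)\<^sup>2 \<le> B\<^sup>2" using u by (simp add: power_mono)
    moreover have "0 \<le> (norm u)\<^sup>2" by simp
    ultimately show ?thesis by (smt (verit))
  qed
  have a2: "\<bar>(norm u)\<^sup>2 - (norm v)\<^sup>2\<bar> \<le> 2 * B * norm (u - v)"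
  proof -
    have "(norm u)\<^sup>2 - (norm v)\<^sup>2 = (norm u - norm v) * (norm u + norm v)"
      by (simp add: power2_eq_square algebra_simps)
    hence "\<bar>(norm u)\<^sup>2 - (norm v)\<^sup>2\<bar> = \<bar>norm u - norm v\<bar> * (norm u + norm v)"
      by (simp add: abs_mult)
    also have "\<dots> \<le> norm (u - v) * (2 * B)"
      by (rule mult_mono) (use u v norm_triangle_ineq3[of u v] in auto)
    finally show ?thesis by (simp add: mult_ac)
  qed
  have "norm (((norm u)\<^sup>2 - c) *\<^sub>R u - ((norm v)\<^sup>2 - c) *\<^sub>R v)
     \<le> \<bar>(norm u)\<^sup>2 - c\<bar> * norm (u - v) + \<bar>(norm u)\<^sup>2 - (norm v)\<^sup>2\<bar> * norm v"
    unfolding eq using norm_triangle_ineq[of "((norm u)\<^sup>2 - c) *\<^sub>R (u - v)" "((norm u)\<^sup>2 - (norm v)\<^sup>2) *\<^sub>R v"]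
    by simp
  also have "\<dots> \<le> (B\<^sup>2 + \<bar>c\<bar>) * norm (u - v) + (2 * B * norm (u - v)) * B"
    by (intro add_mono mult_mono a1 a2 v) (use B0 in auto)
  also have "\<dots> = (3 * B\<^sup>2 + \<bar>c\<bar>) * norm (u - v)" by (simp add: algebra_simps power2_eq_square)
  finally show ?thesis .
qed

lemma Gz_lip:
  fixes B :: real
  assumes EoE: "Eo \<subseteq> E" and noloop: "\<forall>(i, j)\<in>E. i \<noteq> j" and orient: "\<forall>(i, j)\<in>E. (j, i) \<notin> E"
  shows "\<exists>L\<ge>0. \<forall>x y :: (real^'d)^('n::finite \<times> 'n). norm x \<le> B \<longrightarrow> norm y \<le> B \<longrightarrow>
           norm (Gz E Eo d ph x - Gz E Eo d ph y) \<le> L * norm (x - y)"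
proof -
  define L where "L = real CARD('n) * ((\<Sum>k\<in>E. 3 * B\<^sup>2 + \<bar>(d (fst k) (snd k))\<^sup>2\<bar>) + real (card Eo))"
  have L0: "L \<ge> 0" unfolding L_def by (intro mult_nonneg_nonneg add_nonneg_nonneg sum_nonneg) auto
  {
    fix x y :: "(real^'d)^('n \<times> 'n)" assume x: "norm x \<le> B" and y: "norm y \<le> B"
    define a where "a w k = ((norm (w $ k))\<^sup>2 - (d (fst k) (snd k))\<^sup>2) *\<^sub>R w $ k" for w :: "(real^'d)^('n \<times> 'n)" and k
    have "Gz E Eo d ph x - Gz E Eo d ph y = - ((\<chi> i. \<Sum>k\<in>E. inc k i *\<^sub>R (a x k - a y k))
        + (\<chi> i. \<Sum>k\<in>Eo. inc k i *\<^sub>R (x $ k - y $ k)))"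
    proof -
      have r: "rigTe E d x - rigTe E d y = (\<chi> i. \<Sum>k\<in>E. inc k i *\<^sub>R (a x k - a y k))"
        unfolding rigTe_inc a_def by (simp add: vec_eq_iff sum_subtractf[symmetric] scaleR_diff_right)
      have l: "lap_z E Eo ph x - lap_z E Eo ph y = (\<chi> i. \<Sum>k\<in>Eo. inc k i *\<^sub>R (x $ k - y $ k))"
        unfolding lap_z_inc[OF EoE noloop orient] by (simp add: vec_eq_iff sum_subtractf[symmetric] scaleR_diff_right[symmetric])
      show ?thesis unfolding Gz_def r[symmetric] l[symmetric] by (simp add: algebra_simps)
    qed
    hence "norm (Gz E Eo d ph x - Gz E Eo d ph y) = norm ((\<chi> i. \<Sum>k\<in>E. inc k i *\<^sub>R (a x k - a y k))
        + (\<chi> i. \<Sum>k\<in>Eo. inc k i *\<^sub>R (x $ k - y $ k)))" by (simp only: norm_minus_cancel)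
    also have "\<dots> \<le> norm (\<chi> i. \<Sum>k\<in>E. inc k i *\<^sub>R (a x k - a y k))
        + norm (\<chi> i. \<Sum>k\<in>Eo. inc k i *\<^sub>R (x $ k - y $ k))"
      unfolding norm_minus_cancel by (rule norm_triangle_ineq)
    also have "\<dots> \<le> real CARD('n) * (\<Sum>k\<in>E. norm (a x k - a y k)) + real CARD('n) * (\<Sum>k\<in>Eo. norm (x $ k - y $ k))"
      by (intro add_mono norm_inc_sum)
    also have "\<dots> \<le> real CARD('n) * (\<Sum>k\<in>E. (3 * B\<^sup>2 + \<bar>(d (fst k) (snd k))\<^sup>2\<bar>) * norm (x - y)) + real CARD('n) * (\<Sum>k\<in>Eo. norm (x - y))"
    proof (intro add_mono mult_left_mono sum_mono)
      fix k :: "'n \<times> 'n"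
      have "norm (x $ k) \<le> B" "norm (y $ k) \<le> B" using x y Finite_Cartesian_Product.norm_nth_le order_trans by blast+
      hence "norm (a x k - a y k) \<le> (3 * B\<^sup>2 + \<bar>(d (fst k) (snd k))\<^sup>2\<bar>) * norm (x $ k - y $ k)"
        unfolding a_def by (rule cubic_lip)
      also have "\<dots> \<le> (3 * B\<^sup>2 + \<bar>(d (fst k) (snd k))\<^sup>2\<bar>) * norm (x - y)"
        by (rule mult_left_mono) (auto intro: Finite_Cartesian_Product.norm_nth_le[where x="x - y" and i=k, simplified])
      finally show "norm (a x k - a y k) \<le> (3 * B\<^sup>2 + \<bar>(d (fst k) (snd k))\<^sup>2\<bar>) * norm (x - y)" .
    next
      fix k :: "'n \<times> 'n" show "norm (x $ k - y $ k) \<le> norm (x - y)" using Finite_Cartesian_Product.norm_nth_le[where x="x - y" and i=k] by simp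
    qed auto
    also have "\<dots> = L * norm (x - y)"
    proof -
      have "(\<Sum>k\<in>E. (3 * B\<^sup>2 + \<bar>(d (fst k) (snd k))\<^sup>2\<bar>) * norm (x - y)) = (\<Sum>k\<in>E. 3 * B\<^sup>2 + \<bar>(d (fst k) (snd k))\<^sup>2\<bar>) * norm (x - y)"
        by (rule sum_distrib_right[symmetric])
      moreover have "(\<Sum>k\<in>Eo. norm (x - y)) = real (card Eo) * norm (x - y)" by simp
      ultimately show ?thesis unfolding L_def by (simp only: distrib_left distrib_right mult.assoc)
    qed
    finally have "norm (Gz E Eo d ph x - Gz E Eo d ph y) \<le> L * norm (x - y)" .
  }
  thus ?thesis using L0 by blast
qed

lemma sqdist_deriv:
  fixes x :: "real \<Rightarrow> 'a::real_inner"
  assumes "(x has_vector_derivative v) (at s within S)"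
  shows "((\<lambda>s. (x s - w) \<bullet> (x s - w)) has_real_derivative 2 * ((x s - w) \<bullet> v)) (at s within S)"
  using assms unfolding has_vector_derivative_def has_field_derivative_def
  apply -
  apply (rule has_derivative_eq_rhs)
   apply (rule derivative_eq_intros refl | assumption)+
  apply (auto simp: fun_eq_iff inner_commute algebra_simps)
  done

lemma inner_deriv:
  fixes x :: "real \<Rightarrow> 'a::real_inner"
  assumes "(x has_vector_derivative v) (at s within S)"
  shows "((\<lambda>s. q \<bullet> x s) has_real_derivative q \<bullet> v) (at s within S)"
  using assms unfolding has_vector_derivative_def has_field_derivative_def
  apply -
  apply (rule has_derivative_eq_rhs)
   apply (rule derivative_eq_intros refl | assumption)+
  apply (auto simp: fun_eq_iff inner_commute algebra_simps)
  done

lemma V_along: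
  fixes z :: "real \<Rightarrow> (real^'d)^('n::finite \<times> 'n)"
  assumes EoE: "Eo \<subseteq> E" and noloop: "\<forall>(i, j)\<in>E. i \<noteq> j" and orient: "\<forall>(i, j)\<in>E. (j, i) \<notin> E"
    and zt: "z t \<in> range (zof E)"
    and zd: "(z has_vector_derivative zdyn E Eo d ph (z t)) (at t within S)"
  shows "((\<lambda>s. Vz E Eo d ph (z s)) has_real_derivative - (norm (Gz E Eo d ph (z t)))\<^sup>2) (at t within S)"
proof -
  let ?G = "Gz E Eo d ph (z t)"
  have zd': "(z has_derivative (\<lambda>h. h *\<^sub>R zof E ?G)) (at t within S)"
    using zd zdyn_Gz[OF EoE orient zt] unfolding has_vector_derivative_def by simp
  have "((Vz E Eo d ph \<circ> z) has_derivative (DVz E Eo d ph (z t) \<circ> (\<lambda>h. h *\<^sub>R zof E ?G))) (at t within S)"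
    by (rule diff_chain_within[OF zd' has_derivative_at_withinI[OF Vz_deriv]])
  moreover have "DVz E Eo d ph (z t) \<circ> (\<lambda>h. h *\<^sub>R zof E ?G) = (*) (- (norm ?G)\<^sup>2)"
  proof
    fix h :: real
    have "zof E (h *\<^sub>R ?G) = h *\<^sub>R zof E ?G" using linear_scale[OF linear_zof] by blast
    hence "(DVz E Eo d ph (z t) \<circ> (\<lambda>h. h *\<^sub>R zof E ?G)) h = (rigTe E d (z t) + lap_z E Eo ph (z t)) \<bullet> (h *\<^sub>R ?G)"
      using K_identity[OF EoE noloop orient, of d ph "z t" "h *\<^sub>R ?G"] by (simp add: comp_def)
    also have "\<dots> = - (norm ?G)\<^sup>2 * h"
    proof -
      have A: "rigTe E d (z t) + lap_z E Eo ph (z t) = - ?G" unfolding Gz_def by simp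
      show ?thesis unfolding A by (simp add: power2_norm_eq_inner)
    qed
    finally show "(DVz E Eo d ph (z t) \<circ> (\<lambda>h. h *\<^sub>R zof E ?G)) h = - (norm ?G)\<^sup>2 * h" .
  qed
  ultimately show ?thesis unfolding has_field_derivative_def comp_def by simp
qed

lemma gron_fwd:
  fixes u u' :: "real \<Rightarrow> real"
  assumes ab: "a < b"
    and der: "\<And>s. s \<in> {a..b} \<Longrightarrow> (u has_real_derivative u' s) (at s within {a..b})"
    and bd: "\<And>s. s \<in> {a..b} \<Longrightarrow> u' s \<le> K * u s"
    and nn: "\<And>s. s \<in> {a..b} \<Longrightarrow> 0 \<le> u s"
    and ua: "u a = 0"
  shows "u b = 0"
proof -
  define h where "h s = exp (- K * s) * u s" for s
  define h' where "h' s = exp (- K * s) * (u' s - K * u s)" for s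
  have hd: "(h has_real_derivative h' s) (at s within {a..b})" if "s \<in> {a..b}" for s
  proof -
    have e: "((\<lambda>s. exp (- K * s)) has_real_derivative exp (- K * s) * (- K)) (at s within {a..b})"
      using DERIV_fun_exp[OF DERIV_cmult_Id[of "- K" s]] by (rule has_field_derivative_at_within)
    show ?thesis unfolding h_def h'_def
      using DERIV_mult[OF e der[OF that]] by (simp add: algebra_simps)
  qed
  obtain \<xi> where "a < \<xi>" "\<xi> < b" and eq: "h b - h a = (b - a) * h' \<xi>"
    using mvt_within[OF ab order_refl hd] by blast
  have "h' \<xi> \<le> 0" unfolding h'_def using bd[of \<xi>] \<open>a < \<xi>\<close> \<open>\<xi> < b\<close>
    by (intro mult_nonneg_nonpos) auto
  hence "h b \<le> 0" using eq ua ab unfolding h_def by (simp add: mult_nonneg_nonpos)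
  hence "u b \<le> 0" unfolding h_def by (simp add: mult_le_0_iff)
  thus ?thesis using nn[of b] ab by auto
qed

lemma gron_bwd:
  fixes u u' :: "real \<Rightarrow> real"
  assumes ab: "a < b"
    and der: "\<And>s. s \<in> {a..b} \<Longrightarrow> (u has_real_derivative u' s) (at s within {a..b})"
    and bd: "\<And>s. s \<in> {a..b} \<Longrightarrow> - K * u s \<le> u' s"
    and nn: "\<And>s. s \<in> {a..b} \<Longrightarrow> 0 \<le> u s"
    and ub: "u b = 0"
  shows "u a = 0"
proof -
  define h where "h s = exp (K * s) * u s" for s
  define h' where "h' s = exp (K * s) * (u' s + K * u s)" for s
  have hd: "(h has_real_derivative h' s) (at s within {a..b})" if "s \<in> {a..b}" for s
  proof -
    have e: "((\<lambda>s. exp (K * s)) has_real_derivative exp (K * s) * K) (at s within {a..b})"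
      using DERIV_fun_exp[OF DERIV_cmult_Id[of "K" s]] by (rule has_field_derivative_at_within)
    show ?thesis unfolding h_def h'_def
      using DERIV_mult[OF e der[OF that]] by (simp add: algebra_simps)
  qed
  obtain \<xi> where "a < \<xi>" "\<xi> < b" and eq: "h b - h a = (b - a) * h' \<xi>"
    using mvt_within[OF ab order_refl hd] by blast
  have "h' \<xi> \<ge> 0" unfolding h'_def using bd[of \<xi>] \<open>a < \<xi>\<close> \<open>\<xi> < b\<close>
    by (intro mult_nonneg_nonneg) auto
  hence "(b - a) * h' \<xi> \<ge> 0" using ab by (intro mult_nonneg_nonneg) auto
  moreover have "h b = 0" unfolding h_def using ub by simp
  ultimately have "h a \<le> 0" using eq by linarith
  hence "u a \<le> 0" unfolding h_def by (simp add: mult_le_0_iff)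
  thus ?thesis using nn[of a] ab by auto
qed

lemma eq_invariant:
  fixes w :: "(real^'d)^('n::finite \<times> 'n)"
  assumes EoE: "Eo \<subseteq> E" and noloop: "\<forall>(i, j)\<in>E. i \<noteq> j" and orient: "\<forall>(i, j)\<in>E. (j, i) \<notin> E"
    and wZ: "w \<in> range (zof E)" and Gw: "Gz E Eo d ph w = 0"
  shows "invariant_set (zdyn E Eo d ph) (range (zof E)) {w}"
  unfolding invariant_set_def
proof (intro conjI allI impI ballI)
  show "{w} \<subseteq> range (zof E)" using wZ by simp
next
  fix I and x :: "real \<Rightarrow> (real^'d)^('n \<times> 'n)" and t
  assume H: "is_interval I \<and> 0 \<in> I \<and> x 0 \<in> {w} \<and>
        (\<forall>t\<in>I. x t \<in> range (zof E) \<and> (x has_vector_derivative zdyn E Eo d ph (x t)) (at t within I))"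
    and tI: "t \<in> I"
  have ivl: "is_interval I" and I0: "0 \<in> I" and x0: "x 0 = w" using H by auto
  have xZ: "\<And>s. s \<in> I \<Longrightarrow> x s \<in> range (zof E)" using H by auto
  have xd: "\<And>s. s \<in> I \<Longrightarrow> (x has_vector_derivative zdyn E Eo d ph (x s)) (at s within I)" using H by auto
  define a where "a = min 0 t"
  define b where "b = max 0 t"
  have sub: "{a..b} \<subseteq> I"
  proof
    fix s assume s: "s \<in> {a..b}"
    have iv: "\<And>p q r. p \<in> I \<Longrightarrow> q \<in> I \<Longrightarrow> p \<le> r \<Longrightarrow> r \<le> q \<Longrightarrow> r \<in> I"
      using ivl unfolding is_interval_1 by blast
    show "s \<in> I"
    proof (cases "0 \<le> t")
      case True
      hence "0 \<le> s" "s \<le> t" using s unfolding a_def b_def by auto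
      thus ?thesis using iv[OF I0 tI] by blast
    next
      case False
      hence "t \<le> s" "s \<le> 0" using s unfolding a_def b_def by auto
      thus ?thesis using iv[OF tI I0] by blast
    qed
  qed
  have "continuous_on I x"
    unfolding continuous_on_eq_continuous_within using xd has_vector_derivative_continuous by blast
  hence "compact (x ` {a..b})" using sub by (intro compact_continuous_image) (auto intro: continuous_on_subset)
  hence "bounded (x ` {a..b})" by (rule compact_imp_bounded)
  then obtain B where B0: "\<forall>y\<in>x ` {a..b}. norm y \<le> B" unfolding bounded_pos by blast
  hence B: "\<And>s. s \<in> {a..b} \<Longrightarrow> norm (x s) \<le> B" by blast
  obtain L where L0: "L \<ge> 0" and L: "\<And>y y'. norm y \<le> B \<Longrightarrow> norm y' \<le> B \<Longrightarrow>
      norm (Gz E Eo d ph y - Gz E Eo d ph y') \<le> L * norm (y - y')"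
    using Gz_lip[OF EoE noloop orient, of B d ph] by blast
  obtain Kz where Kz0: "Kz > 0" and Kz: "\<And>h :: (real^'d)^'n. norm (zof E h) \<le> norm h * Kz"
    using bounded_linear.pos_bounded[OF bounded_linear_zof] by blast
  define K where "K = 2 * (Kz * L)"
  have a0b: "0 \<in> {a..b}" "t \<in> {a..b}" unfolding a_def b_def by auto
  have nw: "norm w \<le> B" using B[OF a0b(1)] x0 by simp
  define u where "u s = (x s - w) \<bullet> (x s - w)" for s
  define u' where "u' s = 2 * ((x s - w) \<bullet> zdyn E Eo d ph (x s))" for s
  have ud: "(u has_real_derivative u' s) (at s within {a..b})" if "s \<in> {a..b}" for s
  proof -
    have "(u has_real_derivative u' s) (at s within I)"
      unfolding u_def u'_def by (rule sqdist_deriv) (use xd sub that in auto)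
    thus ?thesis using sub by (rule DERIV_subset)
  qed
  have unn: "0 \<le> u s" for s unfolding u_def by simp
  have ubd: "\<bar>u' s\<bar> \<le> K * u s" if "s \<in> {a..b}" for s
  proof -
    have sI: "s \<in> I" using that sub by auto
    have "zdyn E Eo d ph (x s) = zof E (Gz E Eo d ph (x s) - Gz E Eo d ph w)"
      using zdyn_Gz[OF EoE orient xZ[OF sI]] Gw by simp
    hence "norm (zdyn E Eo d ph (x s)) \<le> norm (Gz E Eo d ph (x s) - Gz E Eo d ph w) * Kz"
      using Kz by simp
    also have "\<dots> \<le> L * norm (x s - w) * Kz"
      using L[OF B[OF that] nw] Kz0 by (simp add: mult_right_mono)
    finally have nF: "norm (zdyn E Eo d ph (x s)) \<le> Kz * L * norm (x s - w)" by (simp add: mult_ac)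
    have "\<bar>u' s\<bar> = 2 * \<bar>(x s - w) \<bullet> zdyn E Eo d ph (x s)\<bar>" unfolding u'_def by simp
    also have "\<dots> \<le> 2 * (norm (x s - w) * norm (zdyn E Eo d ph (x s)))"
      using Cauchy_Schwarz_ineq2 by simp
    also have "\<dots> \<le> 2 * (norm (x s - w) * (Kz * L * norm (x s - w)))"
      using nF by (simp add: mult_left_mono)
    also have "\<dots> = K * u s" unfolding K_def u_def by (simp add: power2_norm_eq_inner[symmetric] power2_eq_square mult_ac)
    finally show ?thesis .
  qed
  have "u t = 0"
  proof (cases "t = 0")
    case True thus ?thesis unfolding u_def using x0 by simp
  next
    case False
    show ?thesis
    proof (cases "t > 0")
      case True
      hence ab: "a = 0" "b = t" unfolding a_def b_def by auto
      show ?thesis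
        using gron_fwd[of a b u u' K] ud ubd unn True x0 ab by (force simp: u_def abs_le_iff)
    next
      case False
      hence ab: "a = t" "b = 0" "t < 0" using \<open>t \<noteq> 0\<close> unfolding a_def b_def by auto
      show ?thesis
        using gron_bwd[of a b u u' K] ud ubd unn x0 ab by (force simp: u_def abs_le_iff)
    qed
  qed
  thus "x t \<in> {w}" unfolding u_def by simp
qed

lemma Vz_nonneg: "0 \<le> Vz E Eo d ph w"
  unfolding Vz_def by (intro add_nonneg_nonneg mult_nonneg_nonneg sum_nonneg) auto

lemma x_le_1_sq: "(x::real) \<le> 1 + x\<^sup>2"
proof -
  have "0 \<le> (x - 1/2)\<^sup>2" by simp
  thus ?thesis by (simp add: power2_eq_square algebra_simps)
qed

lemma Vz_bound:
  fixes w :: "(real^'d)^('n::finite \<times> 'n)"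
  assumes wZ: "w \<in> range (zof E)" and V: "Vz E Eo d ph w \<le> V0"
  shows "norm w \<le> (\<Sum>k\<in>E. 2 + (d (fst k) (snd k))\<^sup>2 + 4 * V0)"
proof -
  have w0: "w $ k = 0" if "k \<notin> E" for k using wZ that by (auto simp: zof_def)
  have nk: "norm (w $ k) \<le> 2 + (d (fst k) (snd k))\<^sup>2 + 4 * V0" if kE: "k \<in> E" for k
  proof -
    define q where "q = (norm (w $ k))\<^sup>2 - (d (fst k) (snd k))\<^sup>2"
    have "q\<^sup>2 \<le> (\<Sum>k\<in>E. ((norm (w $ k))\<^sup>2 - (d (fst k) (snd k))\<^sup>2)\<^sup>2)"
      unfolding q_def by (rule member_le_sum) (use kE in auto)
    moreover have "0 \<le> (\<Sum>k\<in>Eo. (norm (w $ k - (ph (snd k) - ph (fst k))))\<^sup>2)" by (rule sum_nonneg) simp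
    ultimately have q2: "q\<^sup>2 \<le> 4 * V0" using V unfolding Vz_def by linarith
    have "q \<le> 1 + q\<^sup>2" by (rule x_le_1_sq)
    have "norm (w $ k) \<le> 1 + (norm (w $ k))\<^sup>2" by (rule x_le_1_sq)
    thus ?thesis using q2 \<open>q \<le> 1 + q\<^sup>2\<close> unfolding q_def by linarith
  qed
  have "norm w \<le> (\<Sum>k\<in>UNIV. norm (w $ k))" by (rule norm_vec_le_sum)
  also have "\<dots> = (\<Sum>k\<in>E. norm (w $ k))"
    by (rule sum.mono_neutral_right) (auto simp: w0)
  also have "\<dots> \<le> (\<Sum>k\<in>E. 2 + (d (fst k) (snd k))\<^sup>2 + 4 * V0)" by (rule sum_mono) (rule nk)
  finally show ?thesis .
qed



lemma part5:
  fixes z :: "real \<Rightarrow> (real^'d)^('n::finite \<times> 'n)"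
  assumes EoE: "Eo \<subseteq> E" and noloop: "\<forall>(i, j)\<in>E. i \<noteq> j" and orient: "\<forall>(i, j)\<in>E. (j, i) \<notin> E"
    and z0: "z 0 \<in> range (zof E)"
    and zd: "\<forall>t\<ge>0. (z has_vector_derivative zdyn E Eo d ph (z t)) (at t within {0..})"
  shows "let M = largest_invariant_in (zdyn E Eo d ph) (range (zof E))
                   {w. rigTe E d w + lap_z E Eo ph w = 0}
         in M \<noteq> {} \<and> ((\<lambda>t. infdist (z t) M) \<longlongrightarrow> 0) at_top"
proof -
  define Z where "Z = range (zof E :: (real^'d)^'n \<Rightarrow> (real^'d)^('n \<times> 'n))"
  define G where "G = Gz E Eo d ph"
  define V where "V t = Vz E Eo d ph (z t)" for t
  define M where "M = largest_invariant_in (zdyn E Eo d ph) Z {w. rigTe E d w + lap_z E Eo ph w = 0}"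
  have zZ: "z t \<in> Z" if "t \<ge> 0" for t
    unfolding Z_def by (rule stays_in_range[OF z0 zd that])
  have Vd: "(V has_real_derivative - (norm (G (z t)))\<^sup>2) (at t within {0..})" if "t \<in> {0..}" for t
    unfolding V_def G_def
    by (rule V_along[OF EoE noloop orient]) (use zZ zd that in \<open>auto simp: Z_def\<close>)
  have Vmono: "V t \<le> V s" if s0: "0 \<le> s" and "s \<le> t" for s t
  proof (cases "s = t")
    case False
    hence st: "s < t" using that by simp
    obtain \<xi> where "V t - V s = (t - s) * (- (norm (G (z \<xi>)))\<^sup>2)"
      using mvt_within[of s t "{0..}" V "\<lambda>t. - (norm (G (z t)))\<^sup>2"] Vd st s0 by auto
    moreover have "(t - s) * (- (norm (G (z \<xi>)))\<^sup>2) \<le> 0" using st by (simp add: mult_nonneg_nonpos)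
    ultimately show ?thesis by simp
  qed simp
  define B where "B = (\<Sum>k\<in>E. 2 + (d (fst k) (snd k))\<^sup>2 + 4 * V 0)"
  have zb: "norm (z t) \<le> B" if "t \<ge> 0" for t
  proof -
    have "V t \<le> V 0" by (rule Vmono) (use that in auto)
    hence "Vz E Eo d ph (z t) \<le> V 0" using V_def[of t] by simp
    thus ?thesis unfolding B_def by (rule Vz_bound[OF zZ[OF that, unfolded Z_def]])
  qed
  have B0: "0 \<le> B" using zb[of 0] norm_ge_zero[of "z 0"] by linarith
  obtain L where L0: "L \<ge> 0" and L: "\<And>y y'. norm y \<le> B \<Longrightarrow> norm y' \<le> B \<Longrightarrow>
      norm (G y - G y') \<le> L * norm (y - y')"
    using Gz_lip[OF EoE noloop orient, of B d ph] unfolding G_def by blast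
  obtain Kz where Kz0: "Kz > 0" and Kz: "\<And>h :: (real^'d)^'n. norm (zof E h) \<le> norm h * Kz"
    using bounded_linear.pos_bounded[OF bounded_linear_zof] by blast
  define Cg where "Cg = norm (G 0) + L * B"
  have Gb: "norm (G (z t)) \<le> Cg" if "t \<ge> 0" for t
  proof -
    have "norm (G (z t)) \<le> norm (G 0) + norm (G (z t) - G 0)" by (rule norm_triangle_sub)
    also have "norm (G (z t) - G 0) \<le> L * norm (z t - 0)" using L[OF zb[OF that], of 0] B0 by simp
    also have "\<dots> \<le> L * B" using zb[OF that] L0 by (simp add: mult_left_mono)
    finally show ?thesis unfolding Cg_def by simp
  qed
  have Cg0: "0 \<le> Cg" using Gb[of 0] norm_ge_zero[of "G (z 0)"] by linarith
  define C where "C = Kz * Cg"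
  have C0: "0 \<le> C" unfolding C_def using Kz0 Cg0 by simp
  have zdb: "norm (zdyn E Eo d ph (z t)) \<le> C" if "t \<ge> 0" for t
  proof -
    have "zdyn E Eo d ph (z t) = zof E (G (z t))"
      using zdyn_Gz[OF EoE orient] zZ[OF that] unfolding Z_def G_def by blast
    hence "norm (zdyn E Eo d ph (z t)) \<le> norm (G (z t)) * Kz" using Kz by simp
    also have "\<dots> \<le> Cg * Kz" using Gb[OF that] Kz0 by (simp add: mult_right_mono)
    finally show ?thesis unfolding C_def by (simp add: mult_ac)
  qed
  have zlip: "norm (z t - z s) \<le> C * (t - s)" if s0: "0 \<le> s" and "s \<le> t" for s t
  proof (cases "z t = z s")
    case True thus ?thesis using C0 that by simp
  next
    case False
    hence st: "s < t" using that by (cases "s = t") auto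
    define q where "q = (1 / norm (z t - z s)) *\<^sub>R (z t - z s)"
    have nq: "norm q = 1" unfolding q_def using False by simp
    have fd: "((\<lambda>r. q \<bullet> z r) has_real_derivative q \<bullet> zdyn E Eo d ph (z r)) (at r within {0..})"
      if "r \<in> {0..}" for r
      by (rule inner_deriv) (use zd that in auto)
    obtain \<xi> where \<xi>: "s < \<xi>" "\<xi> < t" and eq: "q \<bullet> z t - q \<bullet> z s = (t - s) * (q \<bullet> zdyn E Eo d ph (z \<xi>))"
      using mvt_within[of s t "{0..}" "\<lambda>r. q \<bullet> z r" "\<lambda>r. q \<bullet> zdyn E Eo d ph (z r)"] fd st s0 by auto
    have "q \<bullet> z t - q \<bullet> z s = norm (z t - z s)"
      unfolding q_def inner_diff_right[symmetric] using False
      by (simp add: power2_norm_eq_inner[symmetric] power2_eq_square)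
    moreover have "q \<bullet> zdyn E Eo d ph (z \<xi>) \<le> C"
    proof -
      have "q \<bullet> zdyn E Eo d ph (z \<xi>) \<le> norm q * norm (zdyn E Eo d ph (z \<xi>))" by (rule norm_cauchy_schwarz)
      also have "\<dots> \<le> C" using nq zdb[of \<xi>] \<xi> s0 by simp
      finally show ?thesis .
    qed
    ultimately show ?thesis using eq st mult_left_mono[of "q \<bullet> zdyn E Eo d ph (z \<xi>)" C "t - s"]
      by (simp add: mult.commute)
  qed
  have bdd: "bdd_below (V ` {0..})"
  proof (rule bdd_belowI)
    fix x assume "x \<in> V ` {0..}"
    thus "0 \<le> x" unfolding V_def using Vz_nonneg by auto
  qed
  have Vlow: "Inf (V ` {0..}) \<le> V t" if "t \<ge> 0" for t
    by (rule cInf_lower[OF _ bdd]) (use that in auto)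
  have Gconv: "\<exists>T. \<forall>t\<ge>T. norm (G (z t)) < \<epsilon>" if ep: "\<epsilon> > 0" for \<epsilon>
  proof -
    define c where "c = Inf (V ` {0..})"
    define \<delta> where "\<delta> = \<epsilon> / (2 * (L * C + 1))"
    have LC0: "0 \<le> L * C" using L0 C0 by simp
    have d0: "\<delta> > 0" unfolding \<delta>_def using ep LC0 by simp
    have dLC: "L * C * \<delta> \<le> \<epsilon> / 2"
    proof -
      have "L * C * \<delta> = \<epsilon> / 2 * (L * C / (L * C + 1))" unfolding \<delta>_def using LC0 by (simp add: field_simps)
      also have "\<dots> \<le> \<epsilon> / 2 * 1" using ep LC0 by (intro mult_left_mono) auto
      finally show ?thesis by simp
    qed
    define \<eta> where "\<eta> = \<delta> * (\<epsilon> / 2)\<^sup>2"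
    have e0: "\<eta> > 0" unfolding \<eta>_def using d0 ep by simp
    have "Inf (V ` {0..}) < c + \<eta>" using e0 unfolding c_def by simp
    then obtain y where "y \<in> V ` {0..}" "y < c + \<eta>"
      using cInf_lessD[of "V ` {0..}" "c + \<eta>"] by blast
    then obtain T0 where T0: "T0 \<in> {0..}" "V T0 < c + \<eta>" by blast
    show ?thesis
    proof (rule exI[of _ T0], intro allI impI)
      fix t assume tT: "T0 \<le> t"
      hence t0: "0 \<le> t" using T0 by simp
      show "norm (G (z t)) < \<epsilon>"
      proof (rule ccontr)
        assume "\<not> norm (G (z t)) < \<epsilon>"
        hence Gt: "\<epsilon> \<le> norm (G (z t))" by simp
        have tt: "t < t + \<delta>" using d0 by simp
        obtain \<xi> where \<xi>: "t < \<xi>" "\<xi> < t + \<delta>" and eq: "V (t + \<delta>) - V t = ((t + \<delta>) - t) * (- (norm (G (z \<xi>)))\<^sup>2)"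
          using mvt_within[of t "t + \<delta>" "{0..}" V "\<lambda>t. - (norm (G (z t)))\<^sup>2"] Vd tt t0 by auto
        have "norm (G (z \<xi>) - G (z t)) \<le> L * norm (z \<xi> - z t)"
          using L[OF zb zb] \<xi> t0 by simp
        also have "\<dots> \<le> L * (C * (\<xi> - t))" using zlip[of t \<xi>] t0 \<xi> L0 by (simp add: mult_left_mono)
        also have "\<dots> \<le> L * C * \<delta>" using \<xi> L0 C0 by (simp add: mult_left_mono mult.assoc)
        finally have "norm (G (z \<xi>) - G (z t)) \<le> \<epsilon> / 2" using dLC by simp
        hence "\<epsilon> / 2 \<le> norm (G (z \<xi>))" using Gt norm_triangle_ineq3[of "G (z t)" "G (z \<xi>)"]
          by (simp add: norm_minus_commute)
        hence "(\<epsilon> / 2)\<^sup>2 \<le> (norm (G (z \<xi>)))\<^sup>2" using ep by (intro power_mono) auto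
        hence "\<delta> * (\<epsilon> / 2)\<^sup>2 \<le> \<delta> * (norm (G (z \<xi>)))\<^sup>2" using d0 by (simp add: mult_left_mono)
        hence "V (t + \<delta>) \<le> V t - \<eta>" using eq unfolding \<eta>_def by simp
        also have "\<dots> \<le> V T0 - \<eta>" using Vmono[of T0 t] T0 tT by simp
        also have "\<dots> < c" using T0 by simp
        finally have "V (t + \<delta>) < c" .
        moreover have "c \<le> V (t + \<delta>)" unfolding c_def using Vlow t0 d0 by simp
        ultimately show False by simp
      qed
    qed
  qed
  have Glim: "((\<lambda>t. G (z t)) \<longlongrightarrow> 0) at_top"
    unfolding tendsto_iff eventually_at_top_linorder dist_norm using Gconv by simp
  have closedZ: "closed Z" unfolding Z_def by (rule closed_subspace[OF subspace_range_zof])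
  have subseq: "\<exists>r w. strict_mono r \<and> ((\<lambda>n. z (T (r n))) \<longlonglongrightarrow> w) \<and> w \<in> Z \<and> G w = 0"
    if T0: "\<And>n. T n \<ge> 0" and Tlim: "filterlim T at_top sequentially" for T :: "nat \<Rightarrow> real"
  proof -
    have cK: "compact (cball 0 B \<inter> Z)" using closedZ by (intro compact_Int_closed) auto
    have inK: "\<forall>n. z (T n) \<in> cball 0 B \<inter> Z" using zb zZ T0 by auto
    obtain w r where w: "w \<in> cball 0 B \<inter> Z" and r: "strict_mono r" and lim: "((\<lambda>n. z (T n)) \<circ> r) \<longlonglongrightarrow> w"
      using seq_compactE[OF compact_imp_seq_compact[OF cK] inK] by blast
    have lim': "(\<lambda>n. z (T (r n))) \<longlonglongrightarrow> w" using lim by (simp add: comp_def)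
    have Tr: "filterlim (\<lambda>n. T (r n)) at_top sequentially"
      by (rule filterlim_compose[OF Tlim filterlim_subseq[OF r]])
    have l1: "(\<lambda>n. G (z (T (r n)))) \<longlonglongrightarrow> 0"
      by (rule filterlim_compose[OF Glim Tr])
    have nw: "norm w \<le> B" using w by simp
    have "(\<lambda>n. G (z (T (r n))) - G w) \<longlonglongrightarrow> 0"
    proof (rule Lim_null_comparison)
      show "\<forall>\<^sub>F n in sequentially. norm (G (z (T (r n))) - G w) \<le> L * norm (z (T (r n)) - w)"
        using L[OF zb[OF T0] nw] by simp
      have "(\<lambda>n. norm (z (T (r n)) - w)) \<longlonglongrightarrow> 0"
        using tendsto_norm_zero[OF LIM_zero[OF lim']] .
      thus "(\<lambda>n. L * norm (z (T (r n)) - w)) \<longlonglongrightarrow> 0"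
        using tendsto_mult[OF tendsto_const[of L]] by fastforce
    qed
    hence "(\<lambda>n. G (z (T (r n)))) \<longlonglongrightarrow> G w" by (rule LIM_zero_cancel)
    hence "G w = 0" using l1 LIMSEQ_unique by blast
    thus ?thesis using r lim' w by blast
  qed
  have S0M: "w \<in> M" if "w \<in> Z" "G w = 0" for w
  proof -
    have "- (rigTe E d w + lap_z E Eo ph w) = 0" using that(2) unfolding G_def Gz_def .
    hence "rigTe E d w + lap_z E Eo ph w = 0" by (simp only: neg_equal_0_iff_equal)
    hence "{w} \<subseteq> {w. rigTe E d w + lap_z E Eo ph w = 0}" by simp
    moreover have "invariant_set (zdyn E Eo d ph) Z {w}"
      unfolding Z_def by (rule eq_invariant[OF EoE noloop orient]) (use that in \<open>auto simp: Z_def G_def\<close>)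
    ultimately show ?thesis unfolding M_def largest_invariant_in_def by blast
  qed
  have Mne: "M \<noteq> {}"
  proof -
    obtain r w where "w \<in> Z" "G w = 0"
      using subseq[of real, OF _ filterlim_real_sequentially] by auto
    thus ?thesis using S0M by blast
  qed
  have "((\<lambda>t. infdist (z t) M) \<longlongrightarrow> 0) at_top"
  proof (rule tendstoI)
    fix \<epsilon> :: real assume ep: "\<epsilon> > 0"
    show "\<forall>\<^sub>F t in at_top. dist (infdist (z t) M) 0 < \<epsilon>"
    proof (rule ccontr)
      assume "\<not> (\<forall>\<^sub>F t in at_top. dist (infdist (z t) M) 0 < \<epsilon>)"
      hence "\<forall>N. \<exists>t\<ge>N. \<epsilon> \<le> infdist (z t) M"
        unfolding eventually_at_top_linorder by (auto simp: dist_real_def infdist_nonneg not_less)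
      hence "\<forall>n::nat. \<exists>t. t \<ge> real n \<and> \<epsilon> \<le> infdist (z t) M" by blast
      then obtain T where T: "\<And>n. T n \<ge> real n" "\<And>n. \<epsilon> \<le> infdist (z (T n)) M" by metis
      have T0: "\<And>n. T n \<ge> 0" using T(1) order_trans of_nat_0_le_iff by blast
      have Tlim: "filterlim T at_top sequentially"
        by (rule filterlim_at_top_mono[OF filterlim_real_sequentially]) (use T in auto)
      obtain r w where r: "strict_mono r" and lim: "(\<lambda>n. z (T (r n))) \<longlonglongrightarrow> w" and wM: "w \<in> M"
        using subseq[OF T0 Tlim] S0M by blast
      have "\<forall>\<^sub>F n in sequentially. dist (z (T (r n))) w < \<epsilon>" using tendstoD[OF lim ep] .
      then obtain n where "dist (z (T (r n))) w < \<epsilon>" using eventually_sequentially by auto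
      moreover have "infdist (z (T (r n))) M \<le> dist (z (T (r n))) w" by (rule infdist_le[OF wM])
      ultimately show False using T(2)[of "r n"] by simp
    qed
  qed
  thus ?thesis using Mne unfolding M_def Z_def Let_def by simp
qed

theorem theorem2:
  fixes E Eo :: "('n::finite \<times> 'n) set"
    and d :: "'n \<Rightarrow> 'n \<Rightarrow> real"
    and ph :: "'n \<Rightarrow> real^'d::finite"
  assumes dim: "CARD('d) = 2 \<or> CARD('d) = 3"
    and nagents: "CARD('n) \<ge> 2"
    and noloop: "\<forall>(i, j)\<in>E. i \<noteq> j"
    and orient: "\<forall>(i, j)\<in>E. (j, i) \<notin> E"
    and dpos: "\<forall>(i, j)\<in>E. d i j > 0"
    and dsym: "\<forall>(i, j)\<in>E. d j i = d i j"
    and EoE: "Eo \<subseteq> E"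
    and phat: "\<forall>(i, j)\<in>Eo. norm (ph j - ph i) = d i j"
  shows
    "(\<forall>p i. closed_loop E Eo d ph p $ i =
        (\<Sum>j\<in>nbrs E i. ((norm (p $ j - p $ i))\<^sup>2 - (d i j)\<^sup>2) *\<^sub>R (p $ j - p $ i))
      + (\<Sum>j\<in>nbrs Eo i. (p $ j - p $ i) - (ph j - ph i)))
   \<and> (\<forall>p. (potential E Eo d ph has_derivative (\<lambda>h. (- closed_loop E Eo d ph p) \<bullet> h)) (at p))
   \<and> (\<forall>(p :: real \<Rightarrow> (real^'d)^'n) t.
        (p has_vector_derivative closed_loop E Eo d ph (p t)) (at t) \<longrightarrow>
        ((\<lambda>s. potential E Eo d ph (p s)) has_real_derivative
            - (norm (rigTe E d (zof E (p t)) + lapbar Eo ph (p t)))\<^sup>2) (at t)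
        \<and> - (norm (rigTe E d (zof E (p t)) + lapbar Eo ph (p t)))\<^sup>2 \<le> 0)
   \<and> (\<forall>p. zof E (closed_loop E Eo d ph p) = zdyn E Eo d ph (zof E p))
   \<and> (\<forall>z :: real \<Rightarrow> (real^'d)^('n \<times> 'n).
        z 0 \<in> range (zof E) \<and>
        (\<forall>t\<ge>0. (z has_vector_derivative zdyn E Eo d ph (z t)) (at t within {0..})) \<longrightarrow>
        (let M = largest_invariant_in (zdyn E Eo d ph) (range (zof E))
                   {w. rigTe E d w + lap_z E Eo ph w = 0}
         in M \<noteq> {} \<and> ((\<lambda>t. infdist (z t) M) \<longlongrightarrow> 0) at_top))"
  apply (intro conjI)
  subgoal using part1[OF noloop orient dsym EoE] by blast
  subgoal using part2[OF EoE noloop orient] by blast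
  subgoal using part3[OF EoE noloop orient] by auto
  subgoal
    apply (rule allI)
    subgoal for p
      using closed_loop_Gz[OF EoE orient, of d ph p] zdyn_Gz[OF EoE orient, of "zof E p" d ph] by simp
    done
  subgoal using part5[OF EoE noloop orient] by blast
  done

end
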